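(* Let $p\in(1,\infty)$, let $\mathbf{A}=[\boldsymbol{a}_1,\dots,\boldsymbol{a}_m]^T\in\mathbb{R}^{m\times n}$ with entries $a_{ij}$, and let $\mathbf{y}\in\mathbb{R}^m$, and assume every column of $\mathbf{A}$ has at least one nonzero entry. Define $f_{LR}(\boldsymbol{x})=\sum_{i=1}^m |y_i-\boldsymbol{a}_i^T\boldsymbol{x}|^p$ for $\boldsymbol{x}\in\mathbb{R}^n$. Starting from an arbitrary $\boldsymbol{x}^0\in\mathbb{R}^n$, generate a sequence $\{\boldsymbol{x}^k\}$ (the PROMPT iteration) as follows: given $\boldsymbol{x}^k$, for each $j=1,\dots,n$ set $$x_j^{k+1}\in\underset{x_j\in\mathbb{R}}{\arg\min}\sum_{\substack{i=1\\ a_{ij}\neq 0}}^{m} |a_{ij}|^{p}\,\bigl|x_j-s_{ij}^k\bigr|^{p},\qquad s_{ij}^k = x_j^k+\frac{y_i-\boldsymbol{a}_i^T\boldsymbol{x}^k}{(n+1)\,a_{ij}}.$$ Then the sequence $\{f_{LR}(\boldsymbol{x}^k)\}$ is monotonically non-increasing (and hence converges to a finite value), and every limit point of $\{\boldsymbol{x}^k\}$ is a stationary point of $f_{LR}$.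
   Context: This update is the minimization of the majorizer of $f_{LR}$ obtained by writing $y_i-\boldsymbol{a}_i^T\boldsymbol{x}=\boldsymbol{c}_i^T\tilde{\boldsymbol{x}}$ with $\boldsymbol{c}_i=[-\boldsymbol{a}_i^T,\ y_i]^T$, $\tilde{\boldsymbol{x}}=[\boldsymbol{x}^T,1]^T$, and applying Jensen's inequality $|\boldsymbol{c}^T\tilde{\boldsymbol{x}}|^p\le \sum_{j=1}^{n+1}\frac{1}{n+1}|(n+1)c_j(\tilde x_j-\tilde x_j^k)+\boldsymbol{c}^T\tilde{\boldsymbol{x}}^k|^p$; the resulting surrogate is separable in the coordinates $x_j$. *)

theory Defs
  imports "HOL-Analysis.Analysis"
begin

definition f_LR :: "real \<Rightarrow> real^'n^'m \<Rightarrow> real^'m \<Rightarrow> real^'n \<Rightarrow> real" where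
  "f_LR p A y x = (\<Sum>i\<in>UNIV. \<bar>y $ i - A $ i \<bullet> x\<bar> powr p)"

definition prompt_s :: "real^'n^'m \<Rightarrow> real^'m \<Rightarrow> real^'n \<Rightarrow> 'm \<Rightarrow> 'n \<Rightarrow> real" where
  "prompt_s A y xk i j = xk $ j + (y $ i - A $ i \<bullet> xk) / ((real CARD('n) + 1) * A $ i $ j)"

definition prompt_obj :: "real \<Rightarrow> real^'n^'m \<Rightarrow> real^'m \<Rightarrow> real^'n \<Rightarrow> 'n \<Rightarrow> real \<Rightarrow> real" where
  "prompt_obj p A y xk j t =
     (\<Sum>i\<in>{i. A $ i $ j \<noteq> 0}. \<bar>A $ i $ j\<bar> powr p * \<bar>t - prompt_s A y xk i j\<bar> powr p)"

definition stationary_point :: "(real^'n \<Rightarrow> real) \<Rightarrow> real^'n \<Rightarrow> bool" where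
  "stationary_point f x \<longleftrightarrow> (f has_derivative (\<lambda>h. 0)) (at x)"

definition seq_limit_point :: "(nat \<Rightarrow> 'a::topological_space) \<Rightarrow> 'a \<Rightarrow> bool" where
  "seq_limit_point X l \<longleftrightarrow> (\<exists>r. strict_mono r \<and> (X \<circ> r) \<longlonglongrightarrow> l)"

end

theory Submission
  imports Defs
begin

lemma psi_deriv:
  assumes p: "1 < (p::real)"
  shows "((\<lambda>t::real. \<bar>t\<bar> powr p) has_real_derivative (p * sgn t * \<bar>t\<bar> powr (p-1))) (at t)"
proof (cases "t = 0")
  case True
  have lim: "((\<lambda>h::real. \<bar>h\<bar> powr (p-1)) \<longlongrightarrow> 0) (at 0)"
    by (rule tendsto_zero_powrI) (auto intro!: tendsto_eq_intros simp: p)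
  have "((\<lambda>h::real. (\<bar>h\<bar> powr p - \<bar>0\<bar> powr p) / (h - 0)) \<longlongrightarrow> 0) (at 0)"
  proof (rule tendsto_norm_zero_cancel)
    show "((\<lambda>h. norm ((\<bar>h\<bar> powr p - \<bar>0\<bar> powr p) / (h - 0))) \<longlongrightarrow> 0) (at (0::real))"
    proof (rule Lim_transform_eventually[OF lim])
      show "\<forall>\<^sub>F h in at (0::real). \<bar>h\<bar> powr (p-1) = norm ((\<bar>h\<bar> powr p - \<bar>0\<bar> powr p) / (h - 0))"
        unfolding eventually_at_filter
        by (auto simp: powr_diff p)
    qed
  qed
  then show ?thesis using True
    by (simp add: has_field_derivative_iff)
next
  case False
  show ?thesis
  proof (cases "t > 0")
    case True
    have "((\<lambda>t::real. t powr p) has_real_derivative (p * t powr (p-1))) (at t)"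
      using True by (auto intro!: derivative_eq_intros)
    then have "((\<lambda>t::real. \<bar>t\<bar> powr p) has_real_derivative (p * t powr (p-1))) (at t)"
      apply (rule has_field_derivative_transform_within_open[where S="{0<..}"])
      using True by auto
    then show ?thesis using True by simp
  next
    case False': False
    then have neg: "t < 0" using False by simp
    have "((\<lambda>t::real. (-t) powr p) has_real_derivative (p * (-t) powr (p-1) * (-1))) (at t)"
      using neg by (auto intro!: derivative_eq_intros)
    then have "((\<lambda>t::real. \<bar>t\<bar> powr p) has_real_derivative (p * (-t) powr (p-1) * (-1))) (at t)"
      apply (rule has_field_derivative_transform_within_open[where S="{..<0}"])
      using neg by auto
    then show ?thesis using neg by simp
  qed
qed

lemma psi_convex:
  assumes p: "1 < (p::real)"
  shows "convex_on UNIV (\<lambda>t::real. \<bar>t\<bar> powr p)"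
proof (rule convex_on_realI[where f'="\<lambda>t. p * sgn t * \<bar>t\<bar> powr (p-1)"])
  show "connected (UNIV::real set)" by simp
  show "\<And>x. x \<in> UNIV \<Longrightarrow> ((\<lambda>t::real. \<bar>t\<bar> powr p) has_real_derivative (p * sgn x * \<bar>x\<bar> powr (p-1))) (at x)"
    using psi_deriv[OF p] by blast
  fix x y :: real assume "x \<le> y"
  show "p * sgn x * \<bar>x\<bar> powr (p-1) \<le> p * sgn y * \<bar>y\<bar> powr (p-1)"
  proof -
    consider "0 \<le> x" | "y \<le> 0" | "x < 0" "0 < y" by linarith
    then show ?thesis
    proof cases
      case 1
      then have "\<bar>x\<bar> powr (p-1) \<le> \<bar>y\<bar> powr (p-1)" using \<open>x \<le> y\<close> p by (intro powr_mono2) auto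
      then show ?thesis using 1 \<open>x \<le> y\<close> p by (cases "x = 0"; cases "y = 0") (auto simp: sgn_if)
    next
      case 2
      then have "\<bar>y\<bar> powr (p-1) \<le> \<bar>x\<bar> powr (p-1)" using \<open>x \<le> y\<close> p by (intro powr_mono2) auto
      then show ?thesis using 2 \<open>x \<le> y\<close> p by (cases "x = 0"; cases "y = 0") (auto simp: sgn_if)
    next
      case 3
      have "0 \<le> p * \<bar>y\<bar> powr (p-1)" "0 \<le> p * \<bar>x\<bar> powr (p-1)" using p by auto
      then show ?thesis using 3 by (simp add: sgn_if)
    qed
  qed
qed

lemma psi_differentiable:
  assumes p: "1 < (p::real)" and u: "u differentiable (at w)"
  shows "(\<lambda>w. \<bar>u w\<bar> powr p) differentiable (at w)"
proof -
  have "(\<lambda>t::real. \<bar>t\<bar> powr p) differentiable (at (u w))"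
    using psi_deriv[OF p] real_differentiable_def by (metis differentiable_at_withinI real_differentiableE)
  then show ?thesis using u
    by (rule differentiable_compose[of "\<lambda>t. \<bar>t\<bar> powr p", unfolded o_def])
qed

lemma vec_nth_differentiable: "(\<lambda>x::real^'n. x $ j) differentiable (at w)"
  by (auto intro!: bounded_linear_imp_differentiable bounded_linear_vec_nth)


definition NN :: "'n::finite itself \<Rightarrow> real" where "NN (_::'n itself) = real CARD('n) + 1"

definition resid :: "real^'n^'m \<Rightarrow> real^'m \<Rightarrow> real^'n \<Rightarrow> 'm \<Rightarrow> real" where
  "resid A y x i = y $ i - A $ i \<bullet> x"

definition GG :: "real \<Rightarrow> real^'n^'m \<Rightarrow> real^'m \<Rightarrow> real^'n \<Rightarrow> real^'n \<Rightarrow> real" where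
  "GG p A y x z = (1 / (real CARD('n) + 1)) *
     (\<Sum>i\<in>UNIV. \<bar>resid A y x i\<bar> powr p +
        (\<Sum>j\<in>UNIV. \<bar>resid A y x i - (real CARD('n) + 1) * A $ i $ j * (z $ j - x $ j)\<bar> powr p))"

lemma GG_self:
  fixes A :: "real^'n^'m"
  shows "GG p A y x x = f_LR p A y x"
proof -
  have "\<And>a::real. (a + real CARD('n) * a) / (real CARD('n) + 1) = a"
    by (simp add: field_simps)
  then show ?thesis
  by (simp add: GG_def f_LR_def resid_def sum_distrib_left)
qed

lemma split_j:
  fixes A :: "real^'n^'m"
  assumes p: "1 < p"
  shows "(\<Sum>i\<in>UNIV. \<bar>resid A y x i - (real CARD('n) + 1) * A $ i $ j * (t - x $ j)\<bar> powr p)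
     = (\<Sum>i\<in>{i. A $ i $ j = 0}. \<bar>resid A y x i\<bar> powr p) + (real CARD('n) + 1) powr p * prompt_obj p A y x j t"
proof -
  let ?N = "real CARD('n) + 1"
  have Npos: "?N > 0" by simp
  have eq: "\<bar>resid A y x i - ?N * A $ i $ j * (t - x $ j)\<bar> powr p =
     ?N powr p * (\<bar>A $ i $ j\<bar> powr p * \<bar>t - prompt_s A y x i j\<bar> powr p)" if "A $ i $ j \<noteq> 0" for i
  proof -
    have "?N * A $ i $ j * (t - prompt_s A y x i j) = ?N * A $ i $ j * (t - x $ j) - resid A y x i"
    proof -
      have ps: "prompt_s A y x i j = x $ j + resid A y x i / (?N * A $ i $ j)"
        by (simp add: prompt_s_def resid_def)
      have nz: "?N * A $ i $ j \<noteq> 0" using that Npos by simp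
      show ?thesis unfolding ps using nz by (simp add: field_simps)
    qed
    then have "resid A y x i - ?N * A $ i $ j * (t - x $ j) = - (?N * A $ i $ j * (t - prompt_s A y x i j))"
      by simp
    then have "\<bar>resid A y x i - ?N * A $ i $ j * (t - x $ j)\<bar> = ?N * (\<bar>A $ i $ j\<bar> * \<bar>t - prompt_s A y x i j\<bar>)"
      by (simp only: abs_minus_cancel abs_mult)
    then show ?thesis by (simp add: powr_mult)
  qed
  have "(\<Sum>i\<in>UNIV. \<bar>resid A y x i - ?N * A $ i $ j * (t - x $ j)\<bar> powr p)
     = (\<Sum>i\<in>UNIV. if A $ i $ j = 0 then \<bar>resid A y x i\<bar> powr p
          else ?N powr p * (\<bar>A $ i $ j\<bar> powr p * \<bar>t - prompt_s A y x i j\<bar> powr p))"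
    using eq by (intro sum.cong) auto
  also have "\<dots> = (\<Sum>i\<in>{i. A $ i $ j = 0}. \<bar>resid A y x i\<bar> powr p) + ?N powr p * prompt_obj p A y x j t"
    by (simp add: sum.If_cases prompt_obj_def sum_distrib_left Compl_eq)
  finally show ?thesis .
qed


lemma GG_decomp:
  fixes A :: "real^'n^'m"
  assumes p: "1 < p"
  shows "GG p A y x z = (1 / (real CARD('n) + 1)) * ((\<Sum>i\<in>UNIV. \<bar>resid A y x i\<bar> powr p)
      + (\<Sum>j\<in>UNIV. \<Sum>i\<in>{i. A $ i $ j = 0}. \<bar>resid A y x i\<bar> powr p))
      + ((real CARD('n) + 1) powr p / (real CARD('n) + 1)) * (\<Sum>j\<in>UNIV. prompt_obj p A y x j (z $ j))"
proof -
  let ?N = "real CARD('n) + 1"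
  have "GG p A y x z = (1 / ?N) * ((\<Sum>i\<in>UNIV. \<bar>resid A y x i\<bar> powr p) +
     (\<Sum>j\<in>UNIV. \<Sum>i\<in>UNIV. \<bar>resid A y x i - ?N * A $ i $ j * (z $ j - x $ j)\<bar> powr p))"
    unfolding GG_def sum.distrib
    by (subst sum.swap[of _ UNIV UNIV]) (rule refl)
  also have "(\<Sum>j\<in>UNIV. \<Sum>i\<in>UNIV. \<bar>resid A y x i - ?N * A $ i $ j * (z $ j - x $ j)\<bar> powr p)
     = (\<Sum>j\<in>UNIV. \<Sum>i\<in>{i. A $ i $ j = 0}. \<bar>resid A y x i\<bar> powr p) + ?N powr p * (\<Sum>j\<in>UNIV. prompt_obj p A y x j (z $ j))"
    by (simp add: split_j[OF p] sum.distrib sum_distrib_left)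
  finally have eq: "GG p A y x z = (1 / ?N) * ((\<Sum>i\<in>UNIV. \<bar>resid A y x i\<bar> powr p) +
     ((\<Sum>j\<in>UNIV. \<Sum>i\<in>{i. A $ i $ j = 0}. \<bar>resid A y x i\<bar> powr p) + ?N powr p * (\<Sum>j\<in>UNIV. prompt_obj p A y x j (z $ j))))" .
  have gen: "(1 / N) * (S + (T + Q * P)) = (1 / N) * (S + T) + (Q / N) * P" if "N \<noteq> 0" for S T P Q N :: real
    using that by (simp add: field_simps)
  show ?thesis unfolding eq by (rule gen) simp
qed

lemma GG_step:
  fixes A :: "real^'n^'m"
  assumes p: "1 < p"
    and step: "\<And>j t. prompt_obj p A y x j (x' $ j) \<le> prompt_obj p A y x j t"
  shows "GG p A y x x' \<le> GG p A y x z"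
proof -
  have "(\<Sum>j\<in>UNIV. prompt_obj p A y x j (x' $ j)) \<le> (\<Sum>j\<in>UNIV. prompt_obj p A y x j (z $ j))"
    by (intro sum_mono step)
  moreover have "0 \<le> (real CARD('n) + 1) powr p / (real CARD('n) + 1)" by simp
  ultimately show ?thesis unfolding GG_decomp[OF p]
    by (intro add_left_mono mult_left_mono) simp_all
qed

lemma sum_option_UNIV: "(\<Sum>w\<in>(UNIV::'a::finite option set). f w) = f None + (\<Sum>j\<in>UNIV. f (Some j))"
  by (simp add: UNIV_option_conv sum.reindex)

lemma card_option_UNIV: "real (card (UNIV::'a::finite option set)) = real CARD('a) + 1"
  by (simp add: UNIV_option_conv card_image)

lemma jensen_GG:
  fixes A :: "real^'n^'m"
  assumes p: "1 < p"
  shows "f_LR p A y z \<le> GG p A y x z"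
proof -
  let ?N = "real CARD('n) + 1"
  have Npos: "?N > 0" by simp
  have each: "\<bar>resid A y z i\<bar> powr p \<le> (1 / ?N) * (\<bar>resid A y x i\<bar> powr p +
        (\<Sum>j\<in>UNIV. \<bar>resid A y x i - ?N * A $ i $ j * (z $ j - x $ j)\<bar> powr p))" for i
  proof -
    define v :: "'n option \<Rightarrow> real" where
      "v = (\<lambda>w. case w of None \<Rightarrow> resid A y x i | Some j \<Rightarrow> resid A y x i - ?N * A $ i $ j * (z $ j - x $ j))"
    have inner_eq: "A $ i \<bullet> z - A $ i \<bullet> x = (\<Sum>j\<in>UNIV. A $ i $ j * (z $ j - x $ j))"
      by (simp add: inner_vec_def right_diff_distrib sum_subtractf)
    have sv: "(\<Sum>w\<in>UNIV. v w) = ?N * resid A y z i"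
    proof -
      have "(\<Sum>w\<in>UNIV. v w) = resid A y x i + (\<Sum>j\<in>UNIV. resid A y x i - ?N * A $ i $ j * (z $ j - x $ j))"
        by (simp add: sum_option_UNIV v_def)
      also have "\<dots> = ?N * resid A y x i - ?N * (A $ i \<bullet> z - A $ i \<bullet> x)"
      proof -
        have "(\<Sum>j\<in>UNIV. resid A y x i - ?N * A $ i $ j * (z $ j - x $ j))
            = real CARD('n) * resid A y x i - ?N * (\<Sum>j\<in>UNIV. A $ i $ j * (z $ j - x $ j))"
          by (simp add: sum_subtractf sum_distrib_left mult.assoc)
        then show ?thesis unfolding inner_eq by (simp add: algebra_simps)
      qed
      also have "\<dots> = ?N * resid A y z i" by (simp add: resid_def algebra_simps)
      finally show ?thesis .
    qed
    have "\<bar>\<Sum>w\<in>UNIV. (1 / ?N) *\<^sub>R v w\<bar> powr p \<le> (\<Sum>w\<in>UNIV. (1 / ?N) * \<bar>v w\<bar> powr p)"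
    proof (rule convex_on_sum[where C=UNIV and f="\<lambda>t. \<bar>t\<bar> powr p"])
      show "finite (UNIV :: 'n option set)" by simp
      show "(UNIV :: 'n option set) \<noteq> {}" by simp
      show "convex_on UNIV (\<lambda>t::real. \<bar>t\<bar> powr p)" by (rule psi_convex[OF p])
      show "(\<Sum>w\<in>(UNIV :: 'n option set). 1 / ?N) = 1" using card_option_UNIV[where 'a='n] by simp
    qed auto
    moreover have "(\<Sum>w\<in>UNIV. (1 / ?N) *\<^sub>R v w) = resid A y z i"
      using sv Npos by (simp add: sum_divide_distrib[symmetric])
    moreover have "(\<Sum>w\<in>UNIV. (1 / ?N) * \<bar>v w\<bar> powr p) = (1 / ?N) * (\<bar>resid A y x i\<bar> powr p +
        (\<Sum>j\<in>UNIV. \<bar>resid A y x i - ?N * A $ i $ j * (z $ j - x $ j)\<bar> powr p))"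
      by (simp add: sum_distrib_left[symmetric] sum_option_UNIV v_def sum_divide_distrib[symmetric] add_divide_distrib)
    ultimately show ?thesis by simp
  qed
  have "f_LR p A y z = (\<Sum>i\<in>UNIV. \<bar>resid A y z i\<bar> powr p)" by (simp add: f_LR_def resid_def)
  also have "\<dots> \<le> (\<Sum>i\<in>UNIV. (1 / ?N) * (\<bar>resid A y x i\<bar> powr p +
        (\<Sum>j\<in>UNIV. \<bar>resid A y x i - ?N * A $ i $ j * (z $ j - x $ j)\<bar> powr p)))"
    by (intro sum_mono each)
  also have "\<dots> = GG p A y x z" by (simp add: GG_def sum_distrib_left)
  finally show ?thesis .
qed


lemma f_differentiable:
  fixes A :: "real^'n^'m"
  assumes p: "1 < p"
  shows "f_LR p A y differentiable (at w)"
proof -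
  have "f_LR p A y = (\<lambda>x. \<Sum>i\<in>UNIV. \<bar>y $ i - A $ i \<bullet> x\<bar> powr p)"
    by (simp add: f_LR_def[abs_def])
  moreover have "(\<lambda>x. \<Sum>i\<in>UNIV. \<bar>y $ i - A $ i \<bullet> x\<bar> powr p) differentiable (at w)"
    by (intro differentiable_sum ballI psi_differentiable[OF p]) simp_all
  ultimately show ?thesis by simp
qed

lemma GG_differentiable_z:
  fixes A :: "real^'n^'m"
  assumes p: "1 < p"
  shows "(\<lambda>z. GG p A y x z) differentiable (at w)"
  unfolding GG_def
  by (intro differentiable_sum ballI psi_differentiable[OF p] differentiable_mult differentiable_add
       differentiable_const differentiable_diff vec_nth_differentiable) simp_all

lemma GG_differentiable_x:
  fixes A :: "real^'n^'m"
  assumes p: "1 < p"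
  shows "(\<lambda>x. GG p A y x z) differentiable (at w)"
  unfolding GG_def resid_def
  by (intro differentiable_sum ballI psi_differentiable[OF p] differentiable_mult differentiable_add
       differentiable_const differentiable_diff vec_nth_differentiable differentiable_inner) simp_all

theorem mainTheorem2:
  fixes p :: real and A :: "real^'n^'m" and y :: "real^'m" and x :: "nat \<Rightarrow> real^'n"
  assumes p_gt: "1 < p"
    and cols: "\<forall>j. \<exists>i. A $ i $ j \<noteq> 0"
    and step: "\<forall>k j t. prompt_obj p A y (x k) j (x (Suc k) $ j) \<le> prompt_obj p A y (x k) j t"
  shows "(\<forall>k. f_LR p A y (x (Suc k)) \<le> f_LR p A y (x k))
       \<and> convergent (\<lambda>k. f_LR p A y (x k))
       \<and> (\<forall>l. seq_limit_point x l \<longrightarrow> stationary_point (f_LR p A y) l)"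
proof -
  let ?f = "f_LR p A y"
  let ?G = "GG p A y"
  have gstep: "?G (x k) (x (Suc k)) \<le> ?G (x k) z" for k z
    using step by (intro GG_step[OF p_gt]) blast
  have mono: "?f (x (Suc k)) \<le> ?f (x k)" for k
  proof -
    have "?f (x (Suc k)) \<le> ?G (x k) (x (Suc k))" by (rule jensen_GG[OF p_gt])
    also have "\<dots> \<le> ?G (x k) (x k)" by (rule gstep)
    also have "\<dots> = ?f (x k)" by (rule GG_self)
    finally show ?thesis .
  qed
  have nonneg: "0 \<le> ?f z" for z by (simp add: f_LR_def sum_nonneg)
  have dec: "decseq (\<lambda>k. ?f (x k))" by (rule decseq_SucI) (rule mono)
  obtain L where L: "(\<lambda>k. ?f (x k)) \<longlonglongrightarrow> L"
    using decseq_convergent[OF dec, of 0] nonneg by blast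
  then have conv: "convergent (\<lambda>k. ?f (x k))" by (auto simp: convergent_def)
  have stat: "stationary_point ?f l" if lp: "seq_limit_point x l" for l
  proof -
    obtain r where r: "strict_mono r" and lim: "(x \<circ> r) \<longlonglongrightarrow> l"
      using lp unfolding seq_limit_point_def by blast
    have diff0: "(\<lambda>k. ?f (x k) - ?f (x (Suc k))) \<longlonglongrightarrow> 0"
      using tendsto_diff[OF L LIMSEQ_Suc[OF L]] by simp
    have diffr: "(\<lambda>k. ?f (x (r k)) - ?f (x (Suc (r k)))) \<longlonglongrightarrow> 0"
      using LIMSEQ_subseq_LIMSEQ[OF diff0 r] by (simp add: o_def)
    have isf: "isCont ?f l"
      using f_differentiable[OF p_gt] differentiable_imp_continuous_within by blast
    have minG: "?G l l \<le> ?G l z" for z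
    proof (rule ccontr)
      assume "\<not> ?G l l \<le> ?G l z"
      then have lt: "?G l z < ?f l" using GG_self[of p A y l] by linarith
      have isG: "isCont (\<lambda>w. ?G w z) l"
        using GG_differentiable_x[OF p_gt] differentiable_imp_continuous_within by blast
      have lim2: "(\<lambda>k. ?f (x (r k)) - ?G (x (r k)) z) \<longlonglongrightarrow> ?f l - ?G l z"
        using isCont_tendsto_compose[OF isf lim] isCont_tendsto_compose[OF isG lim]
        by (intro tendsto_diff) (simp_all add: o_def)
      have le: "?f (x (r k)) - ?G (x (r k)) z \<le> ?f (x (r k)) - ?f (x (Suc (r k)))" for k
      proof -
        have "?f (x (Suc (r k))) \<le> ?G (x (r k)) (x (Suc (r k)))" by (rule jensen_GG[OF p_gt])
        also have "\<dots> \<le> ?G (x (r k)) z" by (rule gstep)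
        finally show ?thesis by simp
      qed
      have "?f l - ?G l z \<le> 0"
        by (rule LIMSEQ_le[OF lim2 diffr]) (use le in blast)
      with lt show False by simp
    qed
    obtain D where D: "(?f has_derivative D) (at l)"
      using f_differentiable[OF p_gt, of A y l] unfolding differentiable_def by blast
    obtain E where E: "(?G l has_derivative E) (at l)"
      using GG_differentiable_z[OF p_gt, of A y l l] by (auto simp: differentiable_def)
    have E0: "E = (\<lambda>h. 0)"
      by (rule has_derivative_local_min[OF E]) (intro always_eventually allI minG)
    have "((\<lambda>z. ?G l z - ?f z) has_derivative (\<lambda>h. E h - D h)) (at l)"
      by (intro has_derivative_diff E D)
    then have "(\<lambda>h. E h - D h) = (\<lambda>h. 0)"
    proof (rule has_derivative_local_min)
      show "\<forall>\<^sub>F z in at l. ?G l l - ?f l \<le> ?G l z - ?f z"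
      proof (rule always_eventually, rule allI)
        fix z
        show "?G l l - ?f l \<le> ?G l z - ?f z"
          using jensen_GG[OF p_gt, of A y z l] GG_self[of p A y l] by linarith
      qed
    qed
    then have "D = (\<lambda>h. 0)" using E0 by (simp add: fun_eq_iff)
    then show ?thesis using D by (simp add: stationary_point_def)
  qed
  show ?thesis using mono conv stat by blast
qed

end
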